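(* Let $D=(V,A)$ be a directed graph with $n=|V|$, $r\in V$, and let $(x,f)$ be a feasible solution of (Const-DRAT). Let $S=\{v:x_v>0\}$, $S_1=\{v\in S:x_v\ge n^{-1/3}\}$, $U=\{v\in S:x_v\ge n^{-2/3}\}$, $U'=S\setminus U$, and let $EX$ be the set of $v\in S_1$ such that there is no directed path from $r$ to $v$ in $D[U]$. For $v\in EX$ let $X_v$ be the set of $w\in U'$ such that there is a directed path from $w$ to $v$ in $D[U\cup\{w\}]$. Then $|X_v|\ge n^{1/3}$ for every $v\in EX$.
   Context: $\mathcal P_v$ is the set of simple directed paths from $r$ to $v$. (Const-DRAT), with node costs $c_v\ge0$, prizes $p_v\ge0$ and parameters $B,Q$: $\sum_v x_vp_v\ge Q$; $\sum_v x_vc_v\le B$; $\sum_{P\in\mathcal P_v}f^v_P=x_v$ ($v\ne r$); $\sum_{P\in\mathcal P_v:w\in P}f^v_P\le x_w$ ($v\ne r$, $w\ne v$); $0\le x_v\le1$; $0\le f^v_P\le1$. $D[W]$ denotes the induced subgraph. *)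

theory Defs
  imports Complex_Main
begin

definition is_dpath :: "('a \<times> 'a) set \<Rightarrow> 'a list \<Rightarrow> bool" where
  "is_dpath A p \<longleftrightarrow> p \<noteq> [] \<and> (\<forall>i. Suc i < length p \<longrightarrow> (p ! i, p ! Suc i) \<in> A)"

definition simple_paths :: "'a set \<Rightarrow> ('a \<times> 'a) set \<Rightarrow> 'a \<Rightarrow> 'a \<Rightarrow> 'a list set" where
  "simple_paths V A r v = {p. is_dpath A p \<and> distinct p \<and> set p \<subseteq> V \<and> hd p = r \<and> last p = v}"

definition induced_arcs :: "('a \<times> 'a) set \<Rightarrow> 'a set \<Rightarrow> ('a \<times> 'a) set" where
  "induced_arcs A W = A \<inter> (W \<times> W)"

definition has_path_in :: "('a \<times> 'a) set \<Rightarrow> 'a set \<Rightarrow> 'a \<Rightarrow> 'a \<Rightarrow> bool" where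
  "has_path_in A W a b \<longleftrightarrow>
     (\<exists>p. is_dpath (induced_arcs A W) p \<and> set p \<subseteq> W \<and> hd p = a \<and> last p = b)"

text \<open>Feasibility for (Const-DRAT); f v P is the variable f^v_P.\<close>
definition const_drat_feasible ::
  "'a set \<Rightarrow> ('a \<times> 'a) set \<Rightarrow> 'a \<Rightarrow> ('a \<Rightarrow> real) \<Rightarrow> ('a \<Rightarrow> real) \<Rightarrow> real \<Rightarrow> real
   \<Rightarrow> ('a \<Rightarrow> real) \<Rightarrow> ('a \<Rightarrow> 'a list \<Rightarrow> real) \<Rightarrow> bool" where
  "const_drat_feasible V A r c p B Q x f \<longleftrightarrow>
     (\<Sum>v\<in>V. x v * p v) \<ge> Q \<and>
     (\<Sum>v\<in>V. x v * c v) \<le> B \<and>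
     (\<forall>v\<in>V - {r}. (\<Sum>P\<in>simple_paths V A r v. f v P) = x v) \<and>
     (\<forall>v\<in>V - {r}. \<forall>w\<in>V - {v}.
        (\<Sum>P\<in>{P\<in>simple_paths V A r v. w \<in> set P}. f v P) \<le> x w) \<and>
     (\<forall>v\<in>V. 0 \<le> x v \<and> x v \<le> 1) \<and>
     (\<forall>v\<in>V - {r}. \<forall>P\<in>simple_paths V A r v. 0 \<le> f v P \<and> f v P \<le> 1)"

end

theory Submission
  imports Defs
begin

lemma last_out_path:
  assumes dp: "is_dpath A P" and j: "j < length P" "P ! j \<notin> U" and lastU: "last P \<in> U"
  shows "\<exists>i<length P. P ! i \<notin> U \<and> has_path_in A (U \<union> {P ! i}) (P ! i) (last P)"
proof -
  define J where "J = {j. j < length P \<and> P ! j \<notin> U}"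
  have finJ: "finite J" unfolding J_def by auto
  have jJ: "j \<in> J" using j unfolding J_def by auto
  define i where "i = Max J"
  have iJ: "i \<in> J" unfolding i_def using finJ jJ Max_in by blast
  have imax: "\<And>k. k < length P \<Longrightarrow> k > i \<Longrightarrow> P ! k \<in> U"
  proof (rule ccontr)
    fix k assume "k < length P" "k > i" "P ! k \<notin> U"
    then have "k \<in> J" unfolding J_def by auto
    then have "k \<le> i" unfolding i_def using finJ by auto
    with \<open>k > i\<close> show False by simp
  qed
  have il: "i < length P" and iU: "P ! i \<notin> U" using iJ unfolding J_def by auto
  define q where "q = drop i P"
  have qn: "q \<noteq> []" using il unfolding q_def by simp
  have qnth: "\<And>k. k < length q \<Longrightarrow> q ! k = P ! (i + k)" unfolding q_def using il by simp
  have lq: "length q = length P - i" unfolding q_def by simp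
  have setq: "set q \<subseteq> U \<union> {P ! i}"
  proof
    fix y assume "y \<in> set q"
    then obtain k where k: "k < length q" "q ! k = y" by (auto simp: in_set_conv_nth)
    show "y \<in> U \<union> {P ! i}"
    proof (cases "k = 0")
      case True then show ?thesis using k qnth by auto
    next
      case False then show ?thesis using k qnth imax[of "i+k"] lq by auto
    qed
  qed
  have hdq: "hd q = P ! i" using qn qnth by (simp add: hd_conv_nth)
  have lastq: "last q = last P" unfolding q_def using il by simp
  have dq: "is_dpath (induced_arcs A (U \<union> {P ! i})) q"
    unfolding is_dpath_def induced_arcs_def
  proof (intro conjI allI impI qn)
    fix k assume k: "Suc k < length q"
    have k2: "Suc (i + k) < length P" using k lq by simp
    have "(P ! (i+k), P ! Suc (i + k)) \<in> A" using dp k2 unfolding is_dpath_def by blast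
    moreover have "q ! k = P ! (i+k)" "q ! Suc k = P ! Suc (i+k)" using qnth k by auto
    ultimately have "(q ! k, q ! Suc k) \<in> A" by simp
    moreover have "q ! k \<in> U \<union> {P ! i}" "q ! Suc k \<in> U \<union> {P ! i}"
      using setq k by (meson Suc_lessD nth_mem subsetD)+
    ultimately show "(q ! k, q ! Suc k) \<in> A \<inter> (U \<union> {P ! i}) \<times> (U \<union> {P ! i})" by blast
  qed
  have "has_path_in A (U \<union> {P ! i}) (P ! i) (last P)"
    unfolding has_path_in_def using dq setq hdq lastq by blast
  then show ?thesis using il iU by blast
qed

theorem claim2:
  fixes V :: "'a set" and A :: "('a \<times> 'a) set" and r :: 'a
    and c p x :: "'a \<Rightarrow> real" and B Q :: real and f :: "'a \<Rightarrow> 'a list \<Rightarrow> real"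
  assumes finV: "finite V"
    and arcs: "A \<subseteq> V \<times> V"
    and rV: "r \<in> V"
    and c_nonneg: "\<forall>v\<in>V. c v \<ge> 0"
    and p_nonneg: "\<forall>v\<in>V. p v \<ge> 0"
    and feas: "const_drat_feasible V A r c p B Q x f"
  defines "n \<equiv> real (card V)"
  defines "S \<equiv> {v\<in>V. x v > 0}"
  defines "S1 \<equiv> {v\<in>S. x v \<ge> n powr (-1/3)}"
  defines "U \<equiv> {v\<in>S. x v \<ge> n powr (-2/3)}"
  defines "U' \<equiv> S - U"
  defines "Ex_set \<equiv> {v\<in>S1. \<not> has_path_in A U r v}"
  defines "X \<equiv> (\<lambda>v. {w\<in>U'. has_path_in A (U \<union> {w}) w v})"
  shows "\<forall>v\<in>Ex_set. real (card (X v)) \<ge> n powr (1/3)"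
proof
  fix v assume vE: "v \<in> Ex_set"
  have n1: "n \<ge> 1"
  proof -
    have "card V \<noteq> 0" using finV rV by auto
    then show ?thesis unfolding n_def by simp
  qed
  have npos: "n > 0" using n1 by simp
  have cmp: "n powr (-2/3) \<le> n powr (-1/3)" using n1 by (intro powr_mono) auto
  have vV: "v \<in> V" and xv: "x v \<ge> n powr (-1/3)" and xvpos: "x v > 0"
    and nop: "\<not> has_path_in A U r v"
    using vE unfolding Ex_set_def S1_def S_def by auto
  have vU: "v \<in> U" using vE cmp unfolding Ex_set_def S1_def U_def by auto
  have vr: "v \<noteq> r"
  proof
    assume "v = r"
    then have "has_path_in A U r v" using vU
      unfolding has_path_in_def is_dpath_def by (intro exI[of _ "[r]"]) auto
    with nop show False by simp
  qed
  define SP where "SP = simple_paths V A r v"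
  have vVr: "v \<in> V - {r}" using vV vr by simp
  have F3: "\<forall>v\<in>V - {r}. (\<Sum>P\<in>simple_paths V A r v. f v P) = x v"
    and F4: "\<forall>v\<in>V - {r}. \<forall>w\<in>V - {v}.
        (\<Sum>P\<in>{P\<in>simple_paths V A r v. w \<in> set P}. f v P) \<le> x w"
    and F6: "\<forall>v\<in>V - {r}. \<forall>P\<in>simple_paths V A r v. 0 \<le> f v P \<and> f v P \<le> 1"
    using feas unfolding const_drat_feasible_def by blast+
  have sumx: "(\<Sum>P\<in>SP. f v P) = x v" using F3 vVr unfolding SP_def by blast
  have wb: "\<And>w. w \<in> V - {v} \<Longrightarrow> (\<Sum>P\<in>{P\<in>SP. w \<in> set P}. f v P) \<le> x w"
    using F4 vVr unfolding SP_def by blast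
  have fnn: "\<And>P. P \<in> SP \<Longrightarrow> 0 \<le> f v P" using F6 vVr unfolding SP_def by blast
  have finSP: "finite SP"
  proof (rule ccontr)
    assume "infinite SP"
    then have "(\<Sum>P\<in>SP. f v P) = 0" by simp
    with sumx xvpos show False by simp
  qed
  have finX: "finite (X v)"
    by (rule finite_subset[OF _ finV]) (auto simp: X_def U'_def S_def)
  have XU': "X v \<subseteq> U'" unfolding X_def by auto
  have key: "\<And>P. P \<in> SP \<Longrightarrow> f v P > 0 \<Longrightarrow> \<exists>w\<in>X v. w \<in> set P"
  proof -
    fix P assume PS: "P \<in> SP" and fp: "f v P > 0"
    have PP: "is_dpath A P" "distinct P" "set P \<subseteq> V" "hd P = r" "last P = v"
      using PS unfolding SP_def simple_paths_def by auto
    have Pne: "P \<noteq> []" using PP unfolding is_dpath_def by auto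
    have inS: "\<And>w. w \<in> set P \<Longrightarrow> w \<in> S"
    proof -
      fix w assume wP: "w \<in> set P"
      show "w \<in> S"
      proof (cases "w = v")
        case True then show ?thesis using vV xvpos unfolding S_def by auto
      next
        case False
        have "f v P \<le> (\<Sum>P\<in>{P\<in>SP. w \<in> set P}. f v P)"
          using finSP PS wP fnn by (intro member_le_sum) auto
        also have "\<dots> \<le> x w" using wb[of w] False wP PP(3) by blast
        finally show ?thesis using fp wP PP unfolding S_def by auto
      qed
    qed
    have "\<not> set P \<subseteq> U"
    proof
      assume sU: "set P \<subseteq> U"
      have "is_dpath (induced_arcs A U) P"
        using PP(1) sU unfolding is_dpath_def induced_arcs_def
        by (meson IntI Suc_lessD mem_Sigma_iff nth_mem subsetD)
      then have "has_path_in A U r v" using sU PP unfolding has_path_in_def by blast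
      with nop show False by simp
    qed
    then obtain j where j: "j < length P" "P ! j \<notin> U" by (metis in_set_conv_nth subsetI)
    from last_out_path[OF PP(1) j] PP(5) vU obtain i where
      i: "i < length P" "P ! i \<notin> U" "has_path_in A (U \<union> {P ! i}) (P ! i) v" by auto
    have "P ! i \<in> X v" using i inS[of "P ! i"] unfolding X_def U'_def by auto
    then show "\<exists>w\<in>X v. w \<in> set P" using i nth_mem by blast
  qed
  have step1: "\<And>P. P \<in> SP \<Longrightarrow> f v P \<le> (\<Sum>w\<in>X v. if w \<in> set P then f v P else 0)"
  proof -
    fix P assume PS: "P \<in> SP"
    show "f v P \<le> (\<Sum>w\<in>X v. if w \<in> set P then f v P else 0)"
    proof (cases "f v P > 0")
      case True
      then obtain w where "w \<in> X v" "w \<in> set P" using key PS by blast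
      then have "(if w \<in> set P then f v P else 0) \<le> (\<Sum>w\<in>X v. if w \<in> set P then f v P else 0)"
        using finX fnn[OF PS] by (intro member_le_sum) auto
      then show ?thesis using \<open>w \<in> set P\<close> by simp
    next
      case False
      then have "f v P = 0" using fnn[OF PS] by simp
      moreover have "0 \<le> (\<Sum>w\<in>X v. if w \<in> set P then f v P else 0)"
        using fnn[OF PS] by (intro sum_nonneg) auto
      ultimately show ?thesis by simp
    qed
  qed
  have "x v \<le> (\<Sum>P\<in>SP. \<Sum>w\<in>X v. if w \<in> set P then f v P else 0)"
    unfolding sumx[symmetric] using step1 by (intro sum_mono) auto
  also have "\<dots> = (\<Sum>w\<in>X v. \<Sum>P\<in>SP. if w \<in> set P then f v P else 0)"
    by (rule sum.swap)
  also have "\<dots> = (\<Sum>w\<in>X v. \<Sum>P\<in>{P\<in>SP. w \<in> set P}. f v P)"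
    using finSP by (simp add: sum.inter_filter)
  also have "\<dots> \<le> (\<Sum>w\<in>X v. n powr (-2/3))"
  proof (intro sum_mono)
    fix w assume wX: "w \<in> X v"
    then have wU': "w \<in> U'" using XU' by auto
    then have "w \<in> V - {v}" "x w < n powr (-2/3)" using vU unfolding U'_def U_def S_def by auto
    then show "(\<Sum>P\<in>{P\<in>SP. w \<in> set P}. f v P) \<le> n powr (-2/3)"
      using wb[of w] by linarith
  qed
  also have "\<dots> = real (card (X v)) * n powr (-2/3)" by simp
  finally have "n powr (-1/3) \<le> real (card (X v)) * n powr (-2/3)" using xv by simp
  moreover have "n powr (-1/3) = n powr (1/3) * n powr (-2/3)"
    using npos by (simp add: powr_add[symmetric])
  moreover have "n powr (-2/3) > 0" using npos by simp
  ultimately show "real (card (X v)) \<ge> n powr (1/3)" by simp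
qed

end
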